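(* Assume the policies $\mathcal S$ and $\emptyset$ are unichain in $\mathcal M$ and that $\mathcal M$ is indexable. Then every Whittle index $\lambda_s$ of $\mathcal M$ satisfies $$-\|r^1-r^0\|_\infty-\tfrac12\,\mathrm{sp}(r^1)D(P^1)\|P^1-P^0\|_\infty\ \le\ \lambda_s\ \le\ \|r^1-r^0\|_\infty+\tfrac12\,\mathrm{sp}(r^0)D(P^0)\|P^1-P^0\|_\infty.$$
   Context: Setting. An MDP is $\mathcal M=(\mathcal S,\{0,1\},(P^a)_a,(r^a)_a)$, finite $\mathcal S$, row-stochastic $P^0,P^1$, rewards $r^0,r^1\in\mathbb R^{\mathcal S}$. A policy is a subset $\pi\subseteq\mathcal S$ of states where action 1 is played, inducing $P^\pi$, $r^\pi$; $\mathcal M$ is unichain if every $P^\pi$ has a single recurrent class. For $\lambda\in\mathbb R$, $\mathcal M(\lambda)$ has the same transitions and rewards $r^1-\lambda\mathbf 1$ (action 1), $r^0$ (action 0). For a unichain policy, bias $b^\pi(\lambda)$ solves $g^\pi\mathbf 1+b^\pi=r^\pi+P^\pi b^\pi$; activation advantage $\alpha^\pi_s(\lambda)=r^1_s-\lambda-r^0_s+(P^1_{s,\cdot}-P^0_{s,\cdot})\cdot b^\pi(\lambda)$. A policy is BO (bias optimal) in $\mathcal M(\lambda)$ if gain optimal and bias-maximal among gain-optimal policies; for unichain MDPs $\pi$ is BO iff $\alpha^\pi_s(\lambda)\ge0$ for $s\in\pi$ and $\le0$ for $s\notin\pi$. The optimal activation advantage $\alpha^*_s(\lambda)$ is $\alpha^\pi_s(\lambda)$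 for any BO policy $\pi$ of $\mathcal M(\lambda)$. $\mathcal M$ is indexable if for every $s$ there is $\lambda_s$ (Whittle index) with $\alpha^*_s(\lambda)>0$ for $\lambda<\lambda_s$ and $\alpha^*_s(\lambda)<0$ for $\lambda>\lambda_s$. $\mathrm{sp}(v)=\max v-\min v$; $\|v\|_\infty=\max_s|v_s|$; $\|A\|_\infty=\max_s\sum_{s'}|A_{s,s'}|$. Diameter of a unichain $P$ with recurrent class $\mathcal S_r$: $D(P)=\max_{s\in\mathcal S,s'\in\mathcal S_r}\mathbb E^P[\tau_{s,s'}]$ (expected hitting time). *)

theory Defs
  imports Complex_Main
begin

text \<open>States form a finite type 's. A transition matrix is a function 's => 's => real,
  a reward (or any) vector is a function 's => real. A policy is a set of states
  (those where action 1 is played).\<close>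

definition row_stochastic :: "('s::finite \<Rightarrow> 's \<Rightarrow> real) \<Rightarrow> bool" where
  "row_stochastic P \<longleftrightarrow> (\<forall>s t. 0 \<le> P s t) \<and> (\<forall>s. (\<Sum>t\<in>UNIV. P s t) = 1)"

definition mat_vec :: "('s::finite \<Rightarrow> 's \<Rightarrow> real) \<Rightarrow> ('s \<Rightarrow> real) \<Rightarrow> 's \<Rightarrow> real" where
  "mat_vec P v = (\<lambda>s. \<Sum>t\<in>UNIV. P s t * v t)"

definition pol_P :: "('s \<Rightarrow> 's \<Rightarrow> real) \<Rightarrow> ('s \<Rightarrow> 's \<Rightarrow> real) \<Rightarrow> 's set \<Rightarrow> 's \<Rightarrow> 's \<Rightarrow> real" where
  "pol_P P0 P1 q = (\<lambda>s. if s \<in> q then P1 s else P0 s)"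

definition pol_r :: "('s \<Rightarrow> real) \<Rightarrow> ('s \<Rightarrow> real) \<Rightarrow> real \<Rightarrow> 's set \<Rightarrow> 's \<Rightarrow> real" where
  "pol_r r0 r1 lam q = (\<lambda>s. if s \<in> q then r1 s - lam else r0 s)"

definition reach :: "('s \<Rightarrow> 's \<Rightarrow> real) \<Rightarrow> 's \<Rightarrow> 's \<Rightarrow> bool" where
  "reach P = (\<lambda>s t. 0 < P s t)\<^sup>*\<^sup>*"

definition recurrent :: "('s \<Rightarrow> 's \<Rightarrow> real) \<Rightarrow> 's \<Rightarrow> bool" where
  "recurrent P s \<longleftrightarrow> (\<forall>t. reach P s t \<longrightarrow> reach P t s)"

definition unichain :: "('s \<Rightarrow> 's \<Rightarrow> real) \<Rightarrow> bool" where
  "unichain P \<longleftrightarrow> (\<exists>s. recurrent P s) \<and>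
     (\<forall>s t. recurrent P s \<and> recurrent P t \<longrightarrow> reach P s t)"

definition gain :: "('s::finite \<Rightarrow> 's \<Rightarrow> real) \<Rightarrow> ('s \<Rightarrow> real) \<Rightarrow> 's \<Rightarrow> real" where
  "gain P r s = lim (\<lambda>T. (\<Sum>t<T. ((mat_vec P ^^ t) r) s) / real T)"

definition bias :: "('s::finite \<Rightarrow> 's \<Rightarrow> real) \<Rightarrow> ('s \<Rightarrow> real) \<Rightarrow> 's \<Rightarrow> real" where
  "bias P r s = lim (\<lambda>T. (\<Sum>k\<in>{1..T}. \<Sum>t<k. ((mat_vec P ^^ t) r) s - gain P r s) / real T)"

definition pol_gain :: "('s::finite \<Rightarrow> 's \<Rightarrow> real) \<Rightarrow> ('s \<Rightarrow> 's \<Rightarrow> real) \<Rightarrow> ('s \<Rightarrow> real) \<Rightarrow> ('s \<Rightarrow> real)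
   \<Rightarrow> real \<Rightarrow> 's set \<Rightarrow> 's \<Rightarrow> real" where
  "pol_gain P0 P1 r0 r1 lam q = gain (pol_P P0 P1 q) (pol_r r0 r1 lam q)"

definition pol_bias :: "('s::finite \<Rightarrow> 's \<Rightarrow> real) \<Rightarrow> ('s \<Rightarrow> 's \<Rightarrow> real) \<Rightarrow> ('s \<Rightarrow> real) \<Rightarrow> ('s \<Rightarrow> real)
   \<Rightarrow> real \<Rightarrow> 's set \<Rightarrow> 's \<Rightarrow> real" where
  "pol_bias P0 P1 r0 r1 lam q = bias (pol_P P0 P1 q) (pol_r r0 r1 lam q)"

definition gain_optimal where
  "gain_optimal P0 P1 r0 r1 lam q \<longleftrightarrow>
     (\<forall>q' s. pol_gain P0 P1 r0 r1 lam q' s \<le> pol_gain P0 P1 r0 r1 lam q s)"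

definition bias_optimal where
  "bias_optimal P0 P1 r0 r1 lam q \<longleftrightarrow> gain_optimal P0 P1 r0 r1 lam q \<and>
     (\<forall>q'. gain_optimal P0 P1 r0 r1 lam q' \<longrightarrow>
        (\<forall>s. pol_bias P0 P1 r0 r1 lam q' s \<le> pol_bias P0 P1 r0 r1 lam q s))"

definition act_adv where
  "act_adv P0 P1 r0 r1 lam q s = r1 s - lam - r0 s +
     (\<Sum>t\<in>UNIV. (P1 s t - P0 s t) * pol_bias P0 P1 r0 r1 lam q t)"

definition opt_act_adv where
  "opt_act_adv P0 P1 r0 r1 lam s =
     act_adv P0 P1 r0 r1 lam (SOME q. bias_optimal P0 P1 r0 r1 lam q) s"

definition is_whittle_index where
  "is_whittle_index P0 P1 r0 r1 s l \<longleftrightarrow>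
     (\<forall>lam<l. opt_act_adv P0 P1 r0 r1 lam s > 0) \<and> (\<forall>lam>l. opt_act_adv P0 P1 r0 r1 lam s < 0)"

definition indexable where
  "indexable P0 P1 r0 r1 \<longleftrightarrow> (\<forall>s. \<exists>l. is_whittle_index P0 P1 r0 r1 s l)"

definition sup_norm :: "('s::finite \<Rightarrow> real) \<Rightarrow> real" where
  "sup_norm v = Max (range (\<lambda>s. \<bar>v s\<bar>))"

definition span :: "('s::finite \<Rightarrow> real) \<Rightarrow> real" where
  "span v = Max (range v) - Min (range v)"

definition mat_norm :: "('s::finite \<Rightarrow> 's \<Rightarrow> real) \<Rightarrow> real" where
  "mat_norm A = Max (range (\<lambda>s. \<Sum>t\<in>UNIV. \<bar>A s t\<bar>))"

text \<open>Probability of not having hit s' at any of the times 0..n, starting from s;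
  expected hitting time tau_{s,s'} = min {t >= 0. X_t = s'} is sum_n P(tau > n).\<close>
fun avoid_prob :: "('s::finite \<Rightarrow> 's \<Rightarrow> real) \<Rightarrow> 's \<Rightarrow> nat \<Rightarrow> 's \<Rightarrow> real" where
  "avoid_prob P s' 0 s = (if s = s' then 0 else 1)"
| "avoid_prob P s' (Suc n) s = (if s = s' then 0 else (\<Sum>t\<in>UNIV. P s t * avoid_prob P s' n t))"

definition exp_hit_time :: "('s::finite \<Rightarrow> 's \<Rightarrow> real) \<Rightarrow> 's \<Rightarrow> 's \<Rightarrow> real" where
  "exp_hit_time P s s' = (\<Sum>n. avoid_prob P s' n s)"

definition diameter :: "('s::finite \<Rightarrow> 's \<Rightarrow> real) \<Rightarrow> real" where
  "diameter P = Max {exp_hit_time P s s' | s s'. recurrent P s'}"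

end

theory Submission
  imports Defs "HOL-Analysis.Finite_Cartesian_Product"
begin


lemma mv_add: "mat_vec P (\<lambda>s. a s + b s) s = mat_vec P a s + mat_vec P b s"
  by (simp add: mat_vec_def distrib_left sum.distrib)
lemma mv_diff: "mat_vec P (\<lambda>s. a s - b s) s = mat_vec P a s - mat_vec P b s"
  by (simp add: mat_vec_def right_diff_distrib sum_subtractf)
lemma mv_scale: "mat_vec P (\<lambda>s. c * a s) s = c * mat_vec P a s"
  by (simp add: mat_vec_def sum_distrib_left algebra_simps)
lemma mv_neg: "mat_vec P (\<lambda>s. - a s) s = - mat_vec P a s"
  by (simp add: mat_vec_def sum_negf)
lemma mv_const: "row_stochastic P \<Longrightarrow> mat_vec P (\<lambda>_. c) s = c"
  by (simp add: mat_vec_def row_stochastic_def flip: sum_distrib_right)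
lemma mv_mono: "row_stochastic P \<Longrightarrow> (\<And>t. a t \<le> b t) \<Longrightarrow> mat_vec P a s \<le> mat_vec P b s"
  unfolding mat_vec_def row_stochastic_def by (auto intro!: sum_mono mult_left_mono)
lemma mv_nonneg: "row_stochastic P \<Longrightarrow> (\<And>t. 0 \<le> a t) \<Longrightarrow> 0 \<le> mat_vec P a s"
  using mv_mono[of P "\<lambda>_. 0" a s] mv_const[of P 0 s] by simp
lemma mv_bound: "row_stochastic P \<Longrightarrow> (\<And>t. \<bar>a t\<bar> \<le> B) \<Longrightarrow> \<bar>mat_vec P a s\<bar> \<le> B"
proof -
  assume P: "row_stochastic P" and b: "\<And>t. \<bar>a t\<bar> \<le> B"
  have "mat_vec P a s \<le> B" using mv_mono[of P a "\<lambda>_. B" s] P b mv_const[of P B s] by (simp add: abs_le_iff)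
  moreover have lo: "\<And>t. - B \<le> a t" using b by (metis abs_le_D2 minus_le_iff)
  moreover have "- B \<le> mat_vec P a s" using lo mv_mono[of P "\<lambda>_. -B" a s] P b mv_const[of P "-B" s] by (simp add: abs_le_iff)
  ultimately show ?thesis by simp
qed

lemma it_add: "(mat_vec P ^^ n) (\<lambda>s. a s + b s) s = (mat_vec P ^^ n) a s + (mat_vec P ^^ n) b s"
proof (induction n arbitrary: s)
  case (Suc n)
  have "(mat_vec P ^^ n) (\<lambda>s. a s + b s) = (\<lambda>s. (mat_vec P ^^ n) a s + (mat_vec P ^^ n) b s)"
    using Suc by (simp add: fun_eq_iff)
  then show ?case by (simp add: mv_add)
qed simp
lemma it_diff: "(mat_vec P ^^ n) (\<lambda>s. a s - b s) s = (mat_vec P ^^ n) a s - (mat_vec P ^^ n) b s"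
proof (induction n arbitrary: s)
  case (Suc n)
  have "(mat_vec P ^^ n) (\<lambda>s. a s - b s) = (\<lambda>s. (mat_vec P ^^ n) a s - (mat_vec P ^^ n) b s)"
    using Suc by (simp add: fun_eq_iff)
  then show ?case by (simp add: mv_diff)
qed simp
lemma it_scale: "(mat_vec P ^^ n) (\<lambda>s. c * a s) s = c * (mat_vec P ^^ n) a s"
proof (induction n arbitrary: s)
  case (Suc n)
  have "(mat_vec P ^^ n) (\<lambda>s. c * a s) = (\<lambda>s. c * (mat_vec P ^^ n) a s)"
    using Suc by (simp add: fun_eq_iff)
  then show ?case by (simp add: mv_scale)
qed simp
lemma it_fix: "(\<And>s. mat_vec P k s = k s) \<Longrightarrow> (mat_vec P ^^ n) k s = k s"
proof (induction n arbitrary: s)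
  case (Suc n)
  have "(mat_vec P ^^ n) k = k" using Suc by (simp add: fun_eq_iff)
  then show ?case using Suc by simp
qed simp
lemma it_const: "row_stochastic P \<Longrightarrow> (mat_vec P ^^ n) (\<lambda>_. c) s = c"
  using it_fix[of P "\<lambda>_. c"] mv_const by blast
lemma it_mono: "row_stochastic P \<Longrightarrow> (\<And>t. a t \<le> b t) \<Longrightarrow> (mat_vec P ^^ n) a s \<le> (mat_vec P ^^ n) b s"
proof (induction n arbitrary: s)
  case (Suc n) then show ?case by (simp add: mv_mono)
qed simp
lemma it_nonneg: "row_stochastic P \<Longrightarrow> (\<And>t. 0 \<le> a t) \<Longrightarrow> 0 \<le> (mat_vec P ^^ n) a s"
  using it_mono[of P "\<lambda>_. 0" a n s] it_const[of P n 0 s] by simp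
lemma it_bound: "row_stochastic P \<Longrightarrow> (\<And>t. \<bar>a t\<bar> \<le> B) \<Longrightarrow> \<bar>(mat_vec P ^^ n) a s\<bar> \<le> B"
proof (induction n arbitrary: s)
  case (Suc n) then show ?case by (simp add: mv_bound)
qed simp
lemma it_Suc': "(mat_vec P ^^ n) (mat_vec P v) = (mat_vec P ^^ Suc n) v"
  by (simp add: funpow_swap1)

lemma it_tele: "(\<Sum>t<T. (mat_vec P ^^ t) (\<lambda>s. w s - mat_vec P w s) s) = w s - (mat_vec P ^^ T) w s"
proof (induction T)
  case (Suc T)
  have "(mat_vec P ^^ T) (\<lambda>s. w s - mat_vec P w s) s = (mat_vec P ^^ T) w s - (mat_vec P ^^ Suc T) w s"
    using it_diff[of T P w "mat_vec P w" s] by (simp add: it_Suc')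
  then show ?case using Suc by simp
qed simp

lemma exists_bound: "\<exists>B. \<forall>t. \<bar>(a::'s::finite \<Rightarrow> real) t\<bar> \<le> B"
  by (rule exI[of _ "Max (range (\<lambda>t. \<bar>a t\<bar>))"]) auto



lemma decomp_abs:
  fixes F :: "'a::euclidean_space \<Rightarrow> 'a"
  assumes lin: "linear F" and triv: "\<And>v y. F v = 0 \<Longrightarrow> v = F y \<Longrightarrow> v = 0"
  shows "\<exists>k y. F k = 0 \<and> x = k + F y"
proof -
  let ?S = "range F"
  have subS: "subspace ?S" using lin using linear_subspace_image[OF lin subspace_UNIV] by simp
  have subFS: "subspace (F ` ?S)" using linear_subspace_image[OF lin subS] .
  have incl: "F ` ?S \<subseteq> ?S" by auto
  have spanS: "real_vector.span ?S = ?S" using subS real_vector.span_eq_iff by blast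
  have inj: "inj_on F (real_vector.span ?S)"
    unfolding spanS
  proof (rule inj_onI)
    fix a b assume a: "a \<in> ?S" and b: "b \<in> ?S" and eq: "F a = F b"
    obtain ya yb where "a = F ya" "b = F yb" using a b by auto
    then have "a - b = F (ya - yb)" using lin by (simp add: linear_diff)
    moreover have "F (a - b) = 0" using eq lin by (simp add: linear_diff)
    ultimately have "a - b = 0" using triv by blast
    then show "a = b" by simp
  qed
  have "dim (F ` ?S) = dim ?S" using dim_image_eq[OF lin inj] .
  then have eqS: "F ` ?S = ?S" using subspace_dim_equal[OF subFS subS incl] by simp
  have "F x \<in> F ` ?S" using eqS by auto
  then obtain y where y: "F x = F (F y)" by auto
  have "F (x - F y) = 0" using y lin by (simp add: linear_diff)
  then show ?thesis by (intro exI[of _ "x - F y"] exI[of _ y]) simp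
qed

lemma kr_trivial:
  assumes P: "row_stochastic P" and hfx: "\<And>s. mat_vec P k s = k s"
    and ky: "\<And>s. k s = y s - mat_vec P y s"
  shows "k s = 0"
proof -
  obtain B where B: "\<And>t. \<bar>y t\<bar> \<le> B" using exists_bound by blast
  have eqT: "\<And>T. real T * k s = y s - (mat_vec P ^^ T) y s"
  proof -
    fix T
    have "(\<Sum>t<T. (mat_vec P ^^ t) k s) = real T * k s" using it_fix[of P k] hfx by simp
    moreover have "(\<Sum>t<T. (mat_vec P ^^ t) k s) = (\<Sum>t<T. (mat_vec P ^^ t) (\<lambda>s. y s - mat_vec P y s) s)"
    proof -
      have "k = (\<lambda>s. y s - mat_vec P y s)" using ky by auto
      then show ?thesis by simp
    qed
    ultimately show "real T * k s = y s - (mat_vec P ^^ T) y s" using it_tele[where T=T and P=P and w=y and s=s] by simp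
  qed
  have bd: "\<bar>real T * k s\<bar> \<le> 2 * B" for T
    using eqT[of T] B[of s] it_bound[where a=y and B=B and n=T and s=s, OF P B] by (smt (verit))
  show ?thesis
  proof (rule ccontr)
    assume "k s \<noteq> 0"
    then have pos: "\<bar>k s\<bar> > 0" by simp
    obtain T :: nat where "real T > 2 * B / \<bar>k s\<bar>" using reals_Archimedean2 by blast
    then have "real T * \<bar>k s\<bar> > 2 * B" using pos by (simp add: field_simps)
    then show False using bd[of T] by (simp add: abs_mult)
  qed
qed

lemma decomp1:
  fixes P :: "'s::finite \<Rightarrow> 's \<Rightarrow> real"
  assumes P: "row_stochastic P"
  shows "\<exists>k y. (\<forall>s. mat_vec P k s = k s) \<and> (\<forall>s. x s = k s + (y s - mat_vec P y s))"
proof -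
  define F :: "real^'s \<Rightarrow> real^'s" where "F v = (\<chi> s. v $ s - mat_vec P (($) v) s)" for v
  have lin: "linear F"
    unfolding F_def
    by (rule linearI) (simp_all add: vec_eq_iff mat_vec_def algebra_simps sum.distrib sum_distrib_left)
  have triv: "v = 0" if "F v = 0" "v = F y" for v y
  proof -
    have fx: "\<And>s. mat_vec P (($) v) s = v $ s" using that(1) by (simp add: F_def vec_eq_iff)
    have ky: "\<And>s. v $ s = y $ s - mat_vec P (($) y) s" using that(2) by (simp add: F_def vec_eq_iff)
    show ?thesis using kr_trivial[OF P fx ky] by (simp add: vec_eq_iff)
  qed
  have "\<exists>k y. F k = 0 \<and> vec_lambda x = k + F y" by (rule decomp_abs[OF lin]) (rule triv)
  then obtain k y where ky: "F k = 0" "vec_lambda x = k + F y" by blast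
  show ?thesis
    apply (rule exI[of _ "($) k"], rule exI[of _ "($) y"])
    using ky by (simp add: F_def vec_eq_iff)
qed



lemma bounded_over_n:
  assumes "\<And>T. \<bar>f T\<bar> \<le> (B::real)"
  shows "(\<lambda>T. f T / real T) \<longlonglongrightarrow> 0"
proof (rule tendsto_sandwich[where f = "\<lambda>T. - B / real T" and h = "\<lambda>T. B / real T"])
  show "\<forall>\<^sub>F T in sequentially. - B / real T \<le> f T / real T"
    using assms by (intro always_eventually allI divide_right_mono) (auto simp: abs_le_iff minus_le_iff)
  show "\<forall>\<^sub>F T in sequentially. f T / real T \<le> B / real T"
    using assms by (intro always_eventually allI divide_right_mono) (auto simp: abs_le_iff)
  show "(\<lambda>T. - B / real T) \<longlonglongrightarrow> 0" using lim_const_over_n[of "-B"] by simp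
  show "(\<lambda>T. B / real T) \<longlonglongrightarrow> 0" by (rule lim_const_over_n)
qed

lemma sum_it_x:
  assumes hfx: "\<And>s. mat_vec P k s = k s"
    and hx: "\<And>s. x s = k s + (w s - mat_vec P w s)"
  shows "(\<Sum>t<T. (mat_vec P ^^ t) x s) = real T * k s + (w s - (mat_vec P ^^ T) w s)"
proof -
  have xe: "x = (\<lambda>s. k s + (w s - mat_vec P w s))" using hx by auto
  have "(\<Sum>t<T. (mat_vec P ^^ t) x s) = (\<Sum>t<T. k s + (mat_vec P ^^ t) (\<lambda>s. w s - mat_vec P w s) s)"
    unfolding xe by (simp add: it_add it_fix[OF hfx])
  also have "\<dots> = real T * k s + (w s - (mat_vec P ^^ T) w s)"
    by (simp add: sum.distrib it_tele)
  finally show ?thesis .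
qed

lemma conv_gain:
  assumes P: "row_stochastic P" and hfx: "\<And>s. mat_vec P k s = k s"
    and hx: "\<And>s. x s = k s + (w s - mat_vec P w s)"
  shows "(\<lambda>T. (\<Sum>t<T. (mat_vec P ^^ t) x s) / real T) \<longlonglongrightarrow> k s"
proof -
  obtain B where B: "\<And>t. \<bar>w t\<bar> \<le> B" using exists_bound by blast
  have L0: "(\<lambda>T. k s + (w s - (mat_vec P ^^ T) w s) / real T) \<longlonglongrightarrow> k s + 0"
    apply (rule tendsto_add, simp)
    apply (rule bounded_over_n[where B="2*B"])
    subgoal for T using B[of s] it_bound[where a=w and B=B and s=s and n=T, OF P B] by (smt (verit))
    done
  then have L: "(\<lambda>T. k s + (w s - (mat_vec P ^^ T) w s) / real T) \<longlonglongrightarrow> k s" by simp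
  have E: "\<forall>\<^sub>F T in sequentially. k s + (w s - (mat_vec P ^^ T) w s) / real T
      = (\<Sum>t<T. (mat_vec P ^^ t) x s) / real T"
    using eventually_gt_at_top[of 0]
    by eventually_elim (simp add: sum_it_x[OF hfx hx] field_simps)
  show ?thesis by (rule tendsto_cong[OF E, THEN iffD1, OF L])
qed

lemma gain_eq:
  assumes P: "row_stochastic P" and hfx: "\<And>s. mat_vec P k s = k s"
    and hx: "\<And>s. x s = k s + (w s - mat_vec P w s)"
  shows "gain P x s = k s"
  unfolding gain_def using conv_gain[OF assms] by (rule limI)

lemma conv_bias:
  assumes P: "row_stochastic P" and hfx: "\<And>s. mat_vec P k s = k s"
    and hx: "\<And>s. x s = k s + (w s - mat_vec P w s)"
    and hw: "\<And>s. w s = z s - mat_vec P z s"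
  shows "(\<lambda>T. (\<Sum>m\<in>{1..T}. \<Sum>t<m. (mat_vec P ^^ t) x s - gain P x s) / real T) \<longlonglongrightarrow> w s"
proof -
  have g: "gain P x s = k s" by (rule gain_eq[OF P hfx hx])
  have inner: "(\<Sum>t<m. (mat_vec P ^^ t) x s - gain P x s) = w s - (mat_vec P ^^ m) w s" for m
    using sum_it_x[OF hfx hx, where T=m and s=s] by (simp add: g sum_subtractf)
  have we: "w = (\<lambda>s. z s - mat_vec P z s)" using hw by auto
  have itw: "(mat_vec P ^^ m) w s = (mat_vec P ^^ m) z s - (mat_vec P ^^ Suc m) z s" for m
    unfolding we by (simp add: it_diff it_Suc')
  have outer: "(\<Sum>m\<in>{1..T}. w s - (mat_vec P ^^ m) w s)
      = real T * w s - ((mat_vec P ^^ 1) z s - (mat_vec P ^^ Suc T) z s)" for T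
  proof (induction T)
    case (Suc T)
    have "{1..Suc T} = insert (Suc T) {1..T}" by auto
    then show ?case using Suc by (simp add: itw algebra_simps)
  qed simp
  obtain B where B: "\<And>t. \<bar>z t\<bar> \<le> B" using exists_bound by blast
  have L0: "(\<lambda>T. w s - ((mat_vec P ^^ 1) z s - (mat_vec P ^^ Suc T) z s) / real T) \<longlonglongrightarrow> w s - 0"
    apply (rule tendsto_diff, simp)
    apply (rule bounded_over_n[where B="2*B"])
    subgoal for T using it_bound[where a=z and B=B and s=s and n=1, OF P B] it_bound[where a=z and B=B and s=s and n="Suc T", OF P B]
    by (smt (verit))
    done
  then have L: "(\<lambda>T. w s - ((mat_vec P ^^ 1) z s - (mat_vec P ^^ Suc T) z s) / real T) \<longlonglongrightarrow> w s" by simp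
  have E: "\<forall>\<^sub>F T in sequentially. w s - ((mat_vec P ^^ 1) z s - (mat_vec P ^^ Suc T) z s) / real T
      = (\<Sum>m\<in>{1..T}. \<Sum>t<m. (mat_vec P ^^ t) x s - gain P x s) / real T"
  proof (rule eventually_mono[OF eventually_gt_at_top[of 0]])
    fix T :: nat assume T: "0 < T"
    have "(\<Sum>m\<in>{1..T}. \<Sum>t<m. (mat_vec P ^^ t) x s - gain P x s)
       = real T * w s - ((mat_vec P ^^ 1) z s - (mat_vec P ^^ Suc T) z s)"
      by (simp only: inner outer)
    then show "w s - ((mat_vec P ^^ 1) z s - (mat_vec P ^^ Suc T) z s) / real T
      = (\<Sum>m\<in>{1..T}. \<Sum>t<m. (mat_vec P ^^ t) x s - gain P x s) / real T"
      using T by (simp add: diff_divide_distrib)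
  qed
  show ?thesis by (rule tendsto_cong[OF E, THEN iffD1, OF L])
qed

lemma bias_eq:
  assumes P: "row_stochastic P" and hfx: "\<And>s. mat_vec P k s = k s"
    and hx: "\<And>s. x s = k s + (w s - mat_vec P w s)"
    and hw: "\<And>s. w s = z s - mat_vec P z s"
  shows "bias P x s = w s"
  unfolding bias_def using conv_bias[OF assms] by (rule limI)

lemma decompE:
  fixes P :: "'s::finite \<Rightarrow> 's \<Rightarrow> real"
  assumes P: "row_stochastic P"
  shows "\<exists>k w z. (\<forall>s. mat_vec P k s = k s) \<and> (\<forall>s. w s = z s - mat_vec P z s)
     \<and> (\<forall>s. x s = k s + (w s - mat_vec P w s))"
proof -
  obtain k y where k: "\<forall>s. mat_vec P k s = k s" and xy: "\<forall>s. x s = k s + (y s - mat_vec P y s)"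
    using decomp1[OF P] by blast
  obtain k' z where k': "\<forall>s. mat_vec P k' s = k' s" and yz: "\<forall>s. y s = k' s + (z s - mat_vec P z s)"
    using decomp1[OF P] by blast
  define w where "w s = z s - mat_vec P z s" for s
  have ye: "y = (\<lambda>s. k' s + w s)" using yz w_def by auto
  have "mat_vec P y s = k' s + mat_vec P w s" for s unfolding ye by (simp add: mv_add k')
  then have "x s = k s + (w s - mat_vec P w s)" for s using xy ye by simp
  then show ?thesis using k w_def by blast
qed

lemma conv_gain_any:
  fixes P :: "'s::finite \<Rightarrow> 's \<Rightarrow> real"
  assumes P: "row_stochastic P"
  shows "(\<lambda>T. (\<Sum>t<T. (mat_vec P ^^ t) x s) / real T) \<longlonglongrightarrow> gain P x s"
proof -
  obtain k w z where hk: "\<forall>s. mat_vec P k s = k s" and hx: "\<forall>s. x s = k s + (w s - mat_vec P w s)"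
    using decompE[OF P] by blast
  have "gain P x s = k s" by (rule gain_eq[OF P hk[rule_format] hx[rule_format]])
  then show ?thesis using conv_gain[OF P hk[rule_format] hx[rule_format]] by simp
qed

lemma conv_bias_any:
  fixes P :: "'s::finite \<Rightarrow> 's \<Rightarrow> real"
  assumes P: "row_stochastic P"
  shows "(\<lambda>T. (\<Sum>m\<in>{1..T}. \<Sum>t<m. (mat_vec P ^^ t) x s - gain P x s) / real T) \<longlonglongrightarrow> bias P x s"
proof -
  obtain k w z where hk: "\<forall>s. mat_vec P k s = k s" and hw: "\<forall>s. w s = z s - mat_vec P z s"
     and hx: "\<forall>s. x s = k s + (w s - mat_vec P w s)"
    using decompE[OF P] by blast
  have "bias P x s = w s" by (rule bias_eq[OF P hk[rule_format] hx[rule_format] hw[rule_format]])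
  then show ?thesis using conv_bias[OF P hk[rule_format] hx[rule_format] hw[rule_format]] by simp
qed

lemma gain_nonneg:
  fixes P :: "'s::finite \<Rightarrow> 's \<Rightarrow> real"
  assumes P: "row_stochastic P" and u: "\<And>t. 0 \<le> u t"
  shows "0 \<le> gain P u s"
  apply (rule LIMSEQ_le_const[OF conv_gain_any[OF P]])
  using it_nonneg[OF P u] by (auto intro!: sum_nonneg divide_nonneg_nonneg)

lemma bias_nonneg:
  fixes P :: "'s::finite \<Rightarrow> 's \<Rightarrow> real"
  assumes P: "row_stochastic P" and u: "\<And>t. 0 \<le> u t" and g0: "\<And>t. gain P u t = 0"
  shows "0 \<le> bias P u s"
  apply (rule LIMSEQ_le_const[OF conv_bias_any[OF P]])
  using it_nonneg[OF P u] by (auto intro!: sum_nonneg divide_nonneg_nonneg simp: g0)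

lemma it_lin: "(mat_vec P ^^ n) (\<lambda>s. a * u s + b * v s) s = a * (mat_vec P ^^ n) u s + b * (mat_vec P ^^ n) v s"
  using it_add[where P=P and n=n and a="\<lambda>s. a * u s" and b="\<lambda>s. b * v s" and s=s]
    it_scale[where P=P and n=n and c=a and a=u and s=s] it_scale[where P=P and n=n and c=b and a=v and s=s]
  by simp

lemma gain_lin:
  fixes P :: "'s::finite \<Rightarrow> 's \<Rightarrow> real"
  assumes P: "row_stochastic P"
  shows "gain P (\<lambda>t. a * u t + b * v t) s = a * gain P u s + b * gain P v s"
proof -
  have "(\<lambda>T. a * ((\<Sum>t<T. (mat_vec P ^^ t) u s) / real T) + b * ((\<Sum>t<T. (mat_vec P ^^ t) v s) / real T))
     \<longlonglongrightarrow> a * gain P u s + b * gain P v s"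
    by (rule tendsto_add; rule tendsto_mult_left; rule conv_gain_any[OF P])
  moreover have "(\<Sum>t<T. (mat_vec P ^^ t) (\<lambda>t. a * u t + b * v t) s) / real T =
     a * ((\<Sum>t<T. (mat_vec P ^^ t) u s) / real T) + b * ((\<Sum>t<T. (mat_vec P ^^ t) v s) / real T)" for T
    unfolding it_lin by (simp add: sum.distrib sum_distrib_left add_divide_distrib)
  ultimately have "(\<lambda>T. (\<Sum>t<T. (mat_vec P ^^ t) (\<lambda>t. a * u t + b * v t) s) / real T)
     \<longlonglongrightarrow> a * gain P u s + b * gain P v s" by simp
  then show ?thesis unfolding gain_def by (rule limI)
qed



lemma reach_trans: "reach P a b \<Longrightarrow> reach P b c \<Longrightarrow> reach P a c"
  unfolding reach_def by (rule rtranclp_trans)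

lemma reach_step: "0 < P a b \<Longrightarrow> reach P a b"
  unfolding reach_def by (rule r_into_rtranclp)

lemma reach_refl: "reach P a a"
  unfolding reach_def by simp

lemma reach_recurrent:
  fixes P :: "'s::finite \<Rightarrow> 's \<Rightarrow> real"
  shows "\<exists>t. reach P s t \<and> recurrent P t"
proof (induction s rule: measure_induct_rule[where f = "\<lambda>u. card {v. reach P u v}"])
  case (less u)
  show ?case
  proof (cases "recurrent P u")
    case True then show ?thesis using reach_refl[of P u] by blast
  next
    case False
    then have "\<not> (\<forall>t. reach P u t \<longrightarrow> reach P t u)" unfolding recurrent_def by simp
    then obtain v where uv: "reach P u v" and vu: "\<not> reach P v u" by blast
    have sub: "{w. reach P v w} \<subseteq> {w. reach P u w}"
      using uv reach_trans[of P u v] by auto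
    have "u \<in> {w. reach P u w}" using reach_refl[of P u] by simp
    moreover have "u \<notin> {w. reach P v w}" using vu by simp
    ultimately have "{w. reach P v w} \<subset> {w. reach P u w}" using sub by blast
    then have "card {w. reach P v w} < card {w. reach P u w}" by (rule psubset_card_mono[OF finite])
    then have "\<exists>t. reach P v t \<and> recurrent P t" by (rule less)
    then obtain t where t: "reach P v t" "recurrent P t" by blast
    have "reach P u t" by (rule reach_trans[OF uv t(1)])
    then show ?thesis using t(2) by blast
  qed
qed

lemma unichain_reach:
  fixes P :: "'s::finite \<Rightarrow> 's \<Rightarrow> real"
  assumes "unichain P"
  shows "\<exists>\<rho>. recurrent P \<rho> \<and> (\<forall>s. reach P s \<rho>)"
proof -
  have ex: "\<exists>s. recurrent P s" and uc: "\<And>s t. recurrent P s \<Longrightarrow> recurrent P t \<Longrightarrow> reach P s t"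
    using assms unfolding unichain_def by auto
  obtain \<rho> where r: "recurrent P \<rho>" using ex by blast
  have "reach P s \<rho>" for s
  proof -
    obtain t where t: "reach P s t" "recurrent P t" using reach_recurrent by blast
    have "reach P t \<rho>" by (rule uc[OF t(2) r])
    then show ?thesis by (rule reach_trans[OF t(1)])
  qed
  then show ?thesis using r by blast
qed

lemma harmonic_le:
  fixes P :: "'s::finite \<Rightarrow> 's \<Rightarrow> real"
  assumes P: "row_stochastic P" and h: "\<And>s. mat_vec P k s = k s" and r: "\<And>s. reach P s \<rho>"
  shows "k s \<le> k \<rho>"
proof -
  define M where "M = Max (range k)"
  have kM: "k t \<le> M" for t unfolding M_def by simp
  have "M \<in> range k" unfolding M_def by (rule Max_in) auto
  then obtain s0 where s0: "k s0 = M" by auto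
  have step: "k b = M" if "k a = M" "0 < P a b" for a b
  proof (rule ccontr)
    assume "k b \<noteq> M"
    then have lt: "k b < M" using kM[of b] by simp
    have "P a b * (M - k b) \<le> (\<Sum>t\<in>UNIV. P a t * (M - k t))"
      by (rule member_le_sum) (use P kM in \<open>auto simp: row_stochastic_def\<close>)
    also have "\<dots> = M * (\<Sum>t\<in>UNIV. P a t) - mat_vec P k a"
      by (simp add: mat_vec_def algebra_simps sum_subtractf sum_distrib_left)
    also have "\<dots> = 0" using P h[of a] that(1) by (simp add: row_stochastic_def)
    finally show False using lt that(2) mult_pos_pos[of "P a b" "M - k b"] by linarith
  qed
  have "reach P a b \<Longrightarrow> k a = M \<Longrightarrow> k b = M" for a b
    unfolding reach_def
    by (induction rule: rtranclp_induct) (use step in auto)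
  then have "k \<rho> = M" using r s0 by blast
  then show ?thesis using kM by simp
qed

lemma harmonic_const:
  fixes P :: "'s::finite \<Rightarrow> 's \<Rightarrow> real"
  assumes P: "row_stochastic P" and h: "\<And>s. mat_vec P k s = k s" and r: "\<And>s. reach P s \<rho>"
  shows "k s = k \<rho>"
proof -
  have "mat_vec P (\<lambda>s. - k s) s = - k s" for s using h by (simp add: mv_neg)
  then have "- k s \<le> - k \<rho>" using harmonic_le[OF P _ r, of "\<lambda>s. - k s"] by blast
  then show ?thesis using harmonic_le[OF P h r, of s] by simp
qed

lemma ap_suc: "avoid_prob P r (Suc n) s = (if s = r then 0 else mat_vec P (avoid_prob P r n) s)"
  by (simp add: mat_vec_def)

lemma ap_rho: "avoid_prob P r n r = 0"
  by (cases n) auto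

lemma ap_bounds:
  assumes P: "row_stochastic P"
  shows "0 \<le> avoid_prob P r n s \<and> avoid_prob P r n s \<le> 1"
proof (induction n arbitrary: s)
  case (Suc n)
  have "0 \<le> mat_vec P (avoid_prob P r n) s" using mv_nonneg[OF P] Suc by blast
  moreover have "mat_vec P (avoid_prob P r n) s \<le> 1"
    using mv_mono[OF P, of "avoid_prob P r n" "\<lambda>_. 1" s] Suc mv_const[OF P] by simp
  ultimately show ?case by (simp add: mat_vec_def)
qed simp

lemma ap_mono1:
  assumes P: "row_stochastic P"
  shows "avoid_prob P r (Suc n) s \<le> avoid_prob P r n s"
proof (induction n arbitrary: s)
  case 0 then show ?case using ap_bounds[OF P, of r "Suc 0" s] by auto
next
  case (Suc n)
  have "mat_vec P (avoid_prob P r (Suc n)) s \<le> mat_vec P (avoid_prob P r n) s"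
    by (rule mv_mono[OF P]) (use Suc in auto)
  then show ?case by (simp only: ap_suc) simp
qed

lemma ap_mono:
  assumes P: "row_stochastic P" and "n \<le> m"
  shows "avoid_prob P r m s \<le> avoid_prob P r n s"
  using assms(2)
proof (induction m rule: dec_induct)
  case (step m) then show ?case using ap_mono1[OF P, of r m s] by simp
qed simp

lemma ap_lt1:
  assumes P: "row_stochastic P" and "reach P s r"
  shows "\<exists>n. avoid_prob P r n s < 1"
  using assms(2) unfolding reach_def
proof (induction rule: converse_rtranclp_induct)
  case base then show ?case by (intro exI[of _ 0]) simp
next
  case (step s t)
  then obtain n where n: "avoid_prob P r n t < 1" by blast
  show ?case
  proof (cases "s = r")
    case True then show ?thesis by (intro exI[of _ 0]) simp
  next
    case False
    have "P s t * (1 - avoid_prob P r n t) \<le> (\<Sum>u\<in>UNIV. P s u * (1 - avoid_prob P r n u))"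
      by (rule member_le_sum) (use P ap_bounds[OF P] in \<open>auto simp: row_stochastic_def\<close>)
    also have "\<dots> = (\<Sum>u\<in>UNIV. P s u) - mat_vec P (avoid_prob P r n) s"
      by (simp add: mat_vec_def algebra_simps sum_subtractf)
    also have "\<dots> = 1 - avoid_prob P r (Suc n) s" using P False by (simp add: row_stochastic_def mat_vec_def)
    finally have "0 < 1 - avoid_prob P r (Suc n) s" using step(1) n
      using mult_pos_pos[of "P s t" "1 - avoid_prob P r n t"] by linarith
    then show ?thesis by (intro exI[of _ "Suc n"]) simp
  qed
qed

definition apmax where "apmax P r m = Max (range (avoid_prob P r m))"

lemma ap_le_apmax: "avoid_prob P r m (s::'s::finite) \<le> apmax P r m"
  unfolding apmax_def by simp

lemma apmax_nonneg: "row_stochastic P \<Longrightarrow> 0 \<le> apmax P r m"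
  using ap_le_apmax[of P r m] ap_bounds[of P r m] by (meson order_trans)

lemma ap_mult:
  fixes P :: "'s::finite \<Rightarrow> 's \<Rightarrow> real"
  assumes P: "row_stochastic P"
  shows "avoid_prob P r (n + m) s \<le> avoid_prob P r n s * apmax P r m"
proof (induction n arbitrary: s)
  case 0 then show ?case using ap_le_apmax[of P r m s] by (simp add: ap_rho)
next
  case (Suc n)
  show ?case
  proof (cases "s = r")
    case True then show ?thesis by (simp add: ap_rho)
  next
    case False
    have "mat_vec P (avoid_prob P r (n + m)) s \<le> mat_vec P (\<lambda>t. apmax P r m * avoid_prob P r n t) s"
      by (rule mv_mono[OF P]) (use Suc in \<open>simp add: mult.commute\<close>)
    also have "\<dots> = apmax P r m * mat_vec P (avoid_prob P r n) s" by (rule mv_scale)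
    finally show ?thesis using False by (simp add: mat_vec_def mult.commute)
  qed
qed

lemma ap_summable:
  fixes P :: "'s::finite \<Rightarrow> 's \<Rightarrow> real"
  assumes P: "row_stochastic P" and r: "\<And>s. reach P s r"
  shows "summable (\<lambda>n. avoid_prob P r n s)"
proof -
  have "\<forall>s. \<exists>n. avoid_prob P r n s < 1" using ap_lt1[OF P r] by blast
  then obtain nf where nf: "\<And>s. avoid_prob P r (nf s) s < 1" by metis
  define N where "N = Suc (Max (range nf))"
  have N1: "1 \<le> N" unfolding N_def by simp
  have apN: "avoid_prob P r N s < 1" for s
  proof -
    have "nf s \<le> N" unfolding N_def by (simp add: le_SucI)
    then show ?thesis using ap_mono[OF P, of "nf s" N r s] nf[of s] by simp
  qed
  define \<theta> where "\<theta> = apmax P r N"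
  have th1: "\<theta> < 1" unfolding \<theta>_def apmax_def using apN
    by (metis (mono_tags, lifting) Max_in UNIV_not_empty finite finite_imageI image_iff image_is_empty)
  have th0: "0 \<le> \<theta>" unfolding \<theta>_def by (rule apmax_nonneg[OF P])
  have geo: "avoid_prob P r (k * N) s \<le> \<theta> ^ k" for k s
  proof (induction k arbitrary: s)
    case 0 then show ?case using ap_bounds[OF P, of r 0 s] by simp
  next
    case (Suc k)
    have mx: "apmax P r (k * N) \<le> \<theta> ^ k" unfolding apmax_def using Suc by simp
    have "avoid_prob P r (Suc k * N) s = avoid_prob P r (N + k * N) s" by simp
    also have "\<dots> \<le> avoid_prob P r N s * apmax P r (k * N)" by (rule ap_mult[OF P])
    also have "\<dots> \<le> \<theta> * \<theta> ^ k"
      by (rule mult_mono) (use ap_le_apmax[of P r N s] mx apmax_nonneg[OF P] th0 in \<open>auto simp: \<theta>_def\<close>)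
    finally show ?case by simp
  qed
  show ?thesis
  proof (rule summableI_nonneg_bounded[where x = "real N / (1 - \<theta>)"])
    show "0 \<le> avoid_prob P r n s" for n using ap_bounds[OF P] by blast
    fix K
    have "(\<Sum>i<K. avoid_prob P r i s) \<le> (\<Sum>i<K * N. avoid_prob P r i s)"
      by (rule sum_mono2) (use N1 ap_bounds[OF P] in auto)
    also have "\<dots> = (\<Sum>m<K. \<Sum>i\<in>{m * N..<m * N + N}. avoid_prob P r i s)"
      by (simp add: sum.nat_group)
    also have "\<dots> \<le> (\<Sum>m<K. real N * \<theta> ^ m)"
    proof (rule sum_mono)
      fix m
      have "(\<Sum>i\<in>{m * N..<m * N + N}. avoid_prob P r i s) \<le> (\<Sum>i\<in>{m * N..<m * N + N}. \<theta> ^ m)"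
        by (rule sum_mono) (use ap_mono[OF P] geo order_trans in \<open>meson atLeastLessThan_iff\<close>)
      then show "(\<Sum>i\<in>{m * N..<m * N + N}. avoid_prob P r i s) \<le> real N * \<theta> ^ m" by simp
    qed
    also have "\<dots> = real N * (\<Sum>m<K. \<theta> ^ m)" by (simp add: sum_distrib_left)
    also have "\<dots> \<le> real N * (1 / (1 - \<theta>))"
    proof -
      have "(\<Sum>m<K. \<theta> ^ m) \<le> suminf (\<lambda>m. \<theta> ^ m)"
        by (rule sum_le_suminf) (use th0 th1 in \<open>auto intro: summable_geometric\<close>)
      then have "(\<Sum>m<K. \<theta> ^ m) \<le> 1 / (1 - \<theta>)" using suminf_geometric[of \<theta>] th0 th1 by simp
      then show ?thesis by (rule mult_left_mono) simp
    qed
    finally show "(\<Sum>i<K. avoid_prob P r i s) \<le> real N / (1 - \<theta>)" by simp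
  qed
qed



lemma mv_sum: "mat_vec P (\<lambda>t. \<Sum>k\<in>K. f k t) s = (\<Sum>k\<in>K. mat_vec P (f k) s)"
  unfolding mat_vec_def by (simp add: sum_distrib_left sum.swap[of _ UNIV K])

lemma hbound:
  fixes P :: "'s::finite \<Rightarrow> 's \<Rightarrow> real"
  assumes P: "row_stochastic P" and h\<rho>: "h \<rho> = 0"
    and heq: "\<And>s. s \<noteq> \<rho> \<Longrightarrow> h s = c s + mat_vec P h s"
    and hc: "\<And>s. c s \<le> M" and M0: "0 \<le> M"
    and summ: "\<And>s. summable (\<lambda>n. avoid_prob P \<rho> n s)"
  shows "h s \<le> M * exp_hit_time P s \<rho>"
proof -
  define H where "H = Max (range (\<lambda>t. \<bar>h t\<bar>))"
  have hH: "\<bar>h t\<bar> \<le> H" for t unfolding H_def by simp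
  have claim: "h s \<le> M * (\<Sum>k<n. avoid_prob P \<rho> k s) + H * avoid_prob P \<rho> n s" for n s
  proof (induction n arbitrary: s)
    case 0 show ?case
      using hH[of s] h\<rho> by (cases "s = \<rho>") auto
  next
    case (Suc n)
    show ?case
    proof (cases "s = \<rho>")
      case True then show ?thesis using h\<rho> by (simp add: ap_rho)
    next
      case False
      have "mat_vec P h s \<le> mat_vec P (\<lambda>t. M * (\<Sum>k<n. avoid_prob P \<rho> k t) + H * avoid_prob P \<rho> n t) s"
        by (rule mv_mono[OF P]) (rule Suc)
      also have "\<dots> = M * (\<Sum>k<n. mat_vec P (avoid_prob P \<rho> k) s) + H * mat_vec P (avoid_prob P \<rho> n) s"
        by (simp add: mv_add mv_scale mv_sum)
      finally have A: "mat_vec P h s \<le> M * (\<Sum>k<n. mat_vec P (avoid_prob P \<rho> k) s) + H * mat_vec P (avoid_prob P \<rho> n) s" .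
      have S: "(\<Sum>k<Suc n. avoid_prob P \<rho> k s) = 1 + (\<Sum>k<n. mat_vec P (avoid_prob P \<rho> k) s)"
        using False by (simp only: sum.lessThan_Suc_shift ap_suc) simp
      have "h s = c s + mat_vec P h s" using heq False by blast
      also have "\<dots> \<le> M + (M * (\<Sum>k<n. mat_vec P (avoid_prob P \<rho> k) s) + H * mat_vec P (avoid_prob P \<rho> n) s)"
        using hc[of s] A by linarith
      also have "\<dots> = M * (\<Sum>k<Suc n. avoid_prob P \<rho> k s) + H * avoid_prob P \<rho> (Suc n) s"
        using False by (simp only: S ap_suc) (simp add: algebra_simps)
      finally show ?thesis .
    qed
  qed
  have lim: "(\<lambda>n. M * (\<Sum>k<n. avoid_prob P \<rho> k s) + H * avoid_prob P \<rho> n s) \<longlonglongrightarrow>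
      M * exp_hit_time P s \<rho> + H * 0"
    unfolding exp_hit_time_def
    by (intro tendsto_add tendsto_mult_left summable_LIMSEQ summable_LIMSEQ_zero summ)
  show ?thesis using LIMSEQ_le_const[OF lim] claim by simp
qed

lemma exp_hit_nonneg:
  fixes P :: "'s::finite \<Rightarrow> 's \<Rightarrow> real"
  assumes P: "row_stochastic P" and "summable (\<lambda>n. avoid_prob P \<rho> n s)"
  shows "0 \<le> exp_hit_time P s \<rho>"
  unfolding exp_hit_time_def using assms ap_bounds[OF P] by (simp add: suminf_nonneg)

lemma exp_hit_le_diam:
  fixes P :: "'s::finite \<Rightarrow> 's \<Rightarrow> real"
  assumes "recurrent P \<rho>"
  shows "exp_hit_time P s \<rho> \<le> diameter P"
proof -
  have fin: "finite {exp_hit_time P s s' | s s'. recurrent P s'}"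
  proof (rule finite_subset)
    show "{exp_hit_time P s s' | s s'. recurrent P s'} \<subseteq> (\<lambda>(s, s'). exp_hit_time P s s') ` UNIV" by auto
  qed simp
  show ?thesis unfolding diameter_def using assms by (intro Max_ge[OF fin]) blast
qed

lemma span_bias:
  fixes P :: "'s::finite \<Rightarrow> 's \<Rightarrow> real"
  assumes P: "row_stochastic P" and U: "unichain P"
    and poi: "\<And>s. g + b s = r s + mat_vec P b s"
  shows "span b \<le> span r * diameter P"
proof -
  obtain \<rho> where rec: "recurrent P \<rho>" and rch: "\<And>s. reach P s \<rho>" using unichain_reach[OF U] by blast
  have summ: "\<And>s. summable (\<lambda>n. avoid_prob P \<rho> n s)" using ap_summable[OF P rch] by blast
  define E where "E s = exp_hit_time P s \<rho>" for s
  define D where "D = diameter P"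
  have E0: "0 \<le> E s" for s unfolding E_def by (rule exp_hit_nonneg[OF P summ])
  have ED: "E s \<le> D" for s unfolding E_def D_def by (rule exp_hit_le_diam[OF rec])
  define Rmax where "Rmax = Max (range r)"
  define Rmin where "Rmin = Min (range r)"
  have "Max (range b) \<in> range b" by (rule Max_in) auto
  then obtain s1 where s1: "b s1 = Max (range b)" by (metis rangeE)
  have "Min (range b) \<in> range b" by (rule Min_in) auto
  then obtain s2 where s2: "b s2 = Min (range b)" by (metis rangeE)
  have "mat_vec P b s1 \<le> b s1"
    using mv_mono[OF P, of b "\<lambda>_. b s1" s1] mv_const[OF P] s1 by simp
  moreover have "r s1 \<le> Rmax" unfolding Rmax_def by simp
  ultimately have gmax: "g \<le> Rmax" using poi[of s1] by linarith
  have "b s2 \<le> mat_vec P b s2"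
    using mv_mono[OF P, of "\<lambda>_. b s2" b s2] mv_const[OF P] s2 by simp
  moreover have "Rmin \<le> r s2" unfolding Rmin_def by simp
  ultimately have gmin: "Rmin \<le> g" using poi[of s2] by linarith
  define h where "h t = b t - b \<rho>" for t
  have mvh: "mat_vec P h s = mat_vec P b s - b \<rho>" for s
    unfolding h_def by (simp add: mv_diff mv_const[OF P])
  have up: "h s \<le> (Rmax - g) * E s" for s
    unfolding E_def
  proof (rule hbound[OF P _ _ _ _ summ, where c = "\<lambda>s. r s - g"])
    show "h \<rho> = 0" unfolding h_def by simp
    show "h s = r s - g + mat_vec P h s" if "s \<noteq> \<rho>" for s using poi[of s] mvh[of s] unfolding h_def by simp
    show "r s - g \<le> Rmax - g" for s unfolding Rmax_def by simp
    show "0 \<le> Rmax - g" using gmax by simp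
  qed
  have lo: "- h s \<le> (g - Rmin) * E s" for s
    unfolding E_def
  proof (rule hbound[OF P _ _ _ _ summ, where c = "\<lambda>s. g - r s"])
    show "- h \<rho> = 0" unfolding h_def by simp
    show "- h s = g - r s + mat_vec P (\<lambda>s. - h s) s" if "s \<noteq> \<rho>" for s
      using poi[of s] mvh[of s] mv_neg[of P h s] unfolding h_def by simp
    show "g - r s \<le> g - Rmin" for s unfolding Rmin_def by simp
    show "0 \<le> g - Rmin" using gmin by simp
  qed
  have "span b = h s1 - h s2" unfolding span_def h_def using s1 s2 by simp
  also have "\<dots> \<le> (Rmax - g) * E s1 + (g - Rmin) * E s2" using up[of s1] lo[of s2] by simp
  also have "\<dots> \<le> (Rmax - g) * D + (g - Rmin) * D"
    by (intro add_mono mult_left_mono ED) (use gmax gmin in auto)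
  also have "\<dots> = span r * diameter P" unfolding span_def Rmax_def Rmin_def D_def by (simp add: algebra_simps)
  finally show ?thesis .
qed



lemma pol_stoch:
  assumes "row_stochastic P0" "row_stochastic P1"
  shows "row_stochastic (pol_P P0 P1 q)"
  using assms unfolding row_stochastic_def pol_P_def by auto

lemma mv_pol: "mat_vec (pol_P P0 P1 q) w s = (if s \<in> q then mat_vec P1 w s else mat_vec P0 w s)"
  unfolding mat_vec_def pol_P_def by simp

lemma adv_sum: "(\<Sum>t\<in>UNIV. (P1 s t - P0 s t) * w t) = mat_vec P1 w s - mat_vec P0 w s"
  unfolding mat_vec_def by (simp add: left_diff_distrib sum_subtractf)

lemma gain_range0:
  fixes P :: "'s::finite \<Rightarrow> 's \<Rightarrow> real"
  assumes P: "row_stochastic P"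
  shows "gain P (\<lambda>s. z s - mat_vec P z s) s = 0"
proof -
  obtain kz wz zz where hk: "\<forall>s. mat_vec P kz s = kz s" and hw: "\<forall>s. wz s = zz s - mat_vec P zz s"
     and hx: "\<forall>s. z s = kz s + (wz s - mat_vec P wz s)"
    using decompE[OF P] by blast
  define w2 where "w2 s = wz s - mat_vec P wz s" for s
  have ze: "z = (\<lambda>s. kz s + w2 s)" using hx w2_def by auto
  have "z s - mat_vec P z s = 0 + (w2 s - mat_vec P w2 s)" for s
    unfolding ze by (simp add: mv_add hk)
  then show ?thesis
    by (intro gain_eq[OF P, where w = w2]) (simp_all add: mv_const[OF P])
qed

lemma gain_support:
  fixes P :: "'s::finite \<Rightarrow> 's \<Rightarrow> real"
  assumes P: "row_stochastic P" and u0: "\<And>t. 0 \<le> u t" and gu: "\<And>t. gain P u t = 0"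
    and sup: "\<And>t. u t = 0 \<Longrightarrow> d t = 0"
  shows "gain P d s = 0"
proof -
  define C where "C = Max (range (\<lambda>t. \<bar>d t\<bar> / u t))"
  have dC: "\<bar>d t\<bar> \<le> C * u t" for t
  proof (cases "u t = 0")
    case True then show ?thesis using sup by simp
  next
    case False
    then have up: "0 < u t" using u0[of t] by simp
    have "\<bar>d t\<bar> / u t \<le> C" unfolding C_def by simp
    then show ?thesis using up by (simp add: divide_le_eq)
  qed
  have "0 \<le> gain P (\<lambda>t. C * u t + 1 * d t) s"
    by (rule gain_nonneg[OF P]) (use dC in \<open>smt (verit)\<close>)
  then have A: "0 \<le> gain P d s" using gain_lin[OF P, of C u 1 d s] gu by simp
  have "0 \<le> gain P (\<lambda>t. C * u t + (-1) * d t) s"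
    by (rule gain_nonneg[OF P]) (use dC in \<open>smt (verit)\<close>)
  then have B: "gain P d s \<le> 0" using gain_lin[OF P, of C u "-1" d s] gu by simp
  show ?thesis using A B by simp
qed

lemma BO:
  fixes P0 P1 :: "'s::finite \<Rightarrow> 's \<Rightarrow> real"
  assumes P0: "row_stochastic P0" and P1: "row_stochastic P1"
    and U: "unichain (pol_P P0 P1 \<pi>)"
    and pos: "\<And>s. s \<in> \<pi> \<Longrightarrow> act_adv P0 P1 r0 r1 lam \<pi> s > 0"
    and neg: "\<And>s. s \<notin> \<pi> \<Longrightarrow> act_adv P0 P1 r0 r1 lam \<pi> s < 0"
  shows "bias_optimal P0 P1 r0 r1 lam \<pi>"
proof -
  define P\<pi> where "P\<pi> = pol_P P0 P1 \<pi>"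
  define r\<pi> where "r\<pi> = pol_r r0 r1 lam \<pi>"
  have S\<pi>: "row_stochastic P\<pi>" unfolding P\<pi>_def by (rule pol_stoch[OF P0 P1])
  obtain k w z where hk: "\<forall>s. mat_vec P\<pi> k s = k s" and hw: "\<forall>s. w s = z s - mat_vec P\<pi> z s"
     and hx: "\<forall>s. r\<pi> s = k s + (w s - mat_vec P\<pi> w s)"
    using decompE[OF S\<pi>] by blast
  have gpi: "pol_gain P0 P1 r0 r1 lam \<pi> s = k s" for s
    unfolding pol_gain_def P\<pi>_def[symmetric] r\<pi>_def[symmetric]
    by (rule gain_eq[OF S\<pi> hk[rule_format] hx[rule_format]])
  have bpi: "pol_bias P0 P1 r0 r1 lam \<pi> = w"
    unfolding pol_bias_def P\<pi>_def[symmetric] r\<pi>_def[symmetric]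
    using bias_eq[OF S\<pi> hk[rule_format] hx[rule_format] hw[rule_format]] by auto
  obtain \<rho> where rch: "\<And>s. reach P\<pi> s \<rho>" using unichain_reach[OF U] unfolding P\<pi>_def by blast
  define g0 where "g0 = k \<rho>"
  have kc: "k s = g0" for s unfolding g0_def by (rule harmonic_const[OF S\<pi> hk[rule_format] rch])
  have gpi0: "pol_gain P0 P1 r0 r1 lam \<pi> s = g0" for s using gpi kc by simp
  have adv: "act_adv P0 P1 r0 r1 lam \<pi> s = r1 s - lam - r0 s + (mat_vec P1 w s - mat_vec P0 w s)" for s
    unfolding act_adv_def bpi adv_sum ..
  have key: "pol_gain P0 P1 r0 r1 lam q s \<le> g0 \<and>
     (gain_optimal P0 P1 r0 r1 lam q \<longrightarrow> pol_bias P0 P1 r0 r1 lam q s \<le> w s)" for q s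
  proof -
    define P' where "P' = pol_P P0 P1 q"
    define r' where "r' = pol_r r0 r1 lam q"
    have S': "row_stochastic P'" unfolding P'_def by (rule pol_stoch[OF P0 P1])
    define u where "u s = g0 + w s - r' s - mat_vec P' w s" for s
    have ucase: "0 \<le> u s \<and> (u s = 0 \<longrightarrow> (s \<in> q \<longleftrightarrow> s \<in> \<pi>))" for s
    proof -
      have poi: "r\<pi> s = g0 + w s - mat_vec P\<pi> w s" using hx kc by simp
      consider "s \<in> q" "s \<in> \<pi>" | "s \<notin> q" "s \<notin> \<pi>" | "s \<in> q" "s \<notin> \<pi>" | "s \<notin> q" "s \<in> \<pi>" by blast
      then show ?thesis
      proof cases
        case 1 then show ?thesis using poi
          by (simp add: u_def r'_def P'_def r\<pi>_def P\<pi>_def pol_r_def mv_pol)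
      next
        case 2 then show ?thesis using poi
          by (simp add: u_def r'_def P'_def r\<pi>_def P\<pi>_def pol_r_def mv_pol)
      next
        case 3
        have "u s = - act_adv P0 P1 r0 r1 lam \<pi> s" using 3 poi
          by (simp add: adv u_def r'_def P'_def r\<pi>_def P\<pi>_def pol_r_def mv_pol)
        then show ?thesis using neg[OF 3(2)] 3 by simp
      next
        case 4
        have "u s = act_adv P0 P1 r0 r1 lam \<pi> s" using 4 poi
          by (simp add: adv u_def r'_def P'_def r\<pi>_def P\<pi>_def pol_r_def mv_pol)
        then show ?thesis using pos[OF 4(2)] 4 by simp
      qed
    qed
    obtain ku v zu where hku: "\<forall>s. mat_vec P' ku s = ku s" and hv: "\<forall>s. v s = zu s - mat_vec P' zu s"
       and hu: "\<forall>s. u s = ku s + (v s - mat_vec P' v s)"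
      using decompE[OF S'] by blast
    obtain kb wb zb where hkb: "\<forall>s. mat_vec P' kb s = kb s" and hwb: "\<forall>s. wb s = zb s - mat_vec P' zb s"
       and hb: "\<forall>s. w s = kb s + (wb s - mat_vec P' wb s)"
      using decompE[OF S'] by blast
    define w' where "w' s = wb s - mat_vec P' wb s" for s
    have we: "w = (\<lambda>s. kb s + w' s)" using hb w'_def by auto
    have Pw: "mat_vec P' w s = kb s + mat_vec P' w' s" for s unfolding we by (simp add: mv_add hkb)
    have ue: "u = (\<lambda>s. ku s + (v s - mat_vec P' v s))" using hu by auto
    have rdec: "r' s = (g0 - ku s) + ((w' s - v s) - mat_vec P' (\<lambda>t. w' t - v t) s)" for s
      using u_def[of s] hu[rule_format, of s] Pw[of s] we by (simp add: mv_diff)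
    have fixg: "mat_vec P' (\<lambda>t. g0 - ku t) s = g0 - ku s" for s by (simp add: mv_diff mv_const[OF S'] hku)
    have rng: "w' s - v s = (wb s - zu s) - mat_vec P' (\<lambda>t. wb t - zu t) s" for s
      using hv w'_def by (simp add: mv_diff)
    have gq: "pol_gain P0 P1 r0 r1 lam q s = g0 - ku s" for s
      unfolding pol_gain_def P'_def[symmetric] r'_def[symmetric]
      by (rule gain_eq[OF S' fixg rdec])
    have bq: "pol_bias P0 P1 r0 r1 lam q s = w' s - v s" for s
      unfolding pol_bias_def P'_def[symmetric] r'_def[symmetric]
      by (rule bias_eq[OF S' fixg rdec rng])
    have gu: "gain P' u s = ku s" for s by (rule gain_eq[OF S' hku[rule_format] hu[rule_format]])
    have ku0: "0 \<le> ku s" for s using gain_nonneg[OF S', of u s] ucase gu by simp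
    have part1: "pol_gain P0 P1 r0 r1 lam q s \<le> g0" using gq ku0[of s] by simp
    have part2: "pol_bias P0 P1 r0 r1 lam q s \<le> w s" if go: "gain_optimal P0 P1 r0 r1 lam q"
    proof -
      have gle: "pol_gain P0 P1 r0 r1 lam \<pi> t \<le> pol_gain P0 P1 r0 r1 lam q t" for t
        using go unfolding gain_optimal_def by blast
      have kuz: "ku t = 0" for t using gle[of t] gpi0[of t] gq[of t] ku0[of t] by linarith
      have gu0: "gain P' u t = 0" for t using gu kuz by simp
      have v0: "0 \<le> v s"
      proof -
        have "bias P' u s = v s" by (rule bias_eq[OF S' hku[rule_format] hu[rule_format] hv[rule_format]])
        then show ?thesis using bias_nonneg[OF S' _ gu0, of s] ucase by simp
      qed
      define d where "d t = mat_vec P' z t - mat_vec P\<pi> z t" for t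
      have dsup: "d t = 0" if "u t = 0" for t
        using ucase[of t] that unfolding d_def P'_def P\<pi>_def by (simp add: mv_pol)
      have gd: "gain P' d t = 0" for t by (rule gain_support[OF S' _ gu0 dsup]) (use ucase in blast)
      have wz: "w = (\<lambda>t. 1 * (z t - mat_vec P' z t) + 1 * d t)" using hw d_def by auto
      have gw: "gain P' w t = 0" for t
        unfolding wz gain_lin[OF S'] gain_range0[OF S'] gd by simp
      have "gain P' w t = kb t" for t by (rule gain_eq[OF S' hkb[rule_format] hb[rule_format]])
      then have "kb t = 0" for t using gw by simp
      then have "w' s = w s" using we by simp
      then show ?thesis using bq[of s] v0 by simp
    qed
    show ?thesis using part1 part2 by blast
  qed
  have GO: "gain_optimal P0 P1 r0 r1 lam \<pi>"
    unfolding gain_optimal_def using key gpi0 by simp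
  show ?thesis unfolding bias_optimal_def
    using GO key bpi by simp
qed



lemma opt_eq:
  assumes bo: "bias_optimal P0 P1 r0 r1 lam \<pi>"
  shows "opt_act_adv P0 P1 r0 r1 lam s = act_adv P0 P1 r0 r1 lam \<pi> s"
proof -
  define q where "q = (SOME q. bias_optimal P0 P1 r0 r1 lam q)"
  have bq: "bias_optimal P0 P1 r0 r1 lam q" unfolding q_def using bo by (rule someI)
  have "pol_bias P0 P1 r0 r1 lam q t \<le> pol_bias P0 P1 r0 r1 lam \<pi> t" for t
    using bo bq unfolding bias_optimal_def by blast
  moreover have "pol_bias P0 P1 r0 r1 lam \<pi> t \<le> pol_bias P0 P1 r0 r1 lam q t" for t
    using bo bq unfolding bias_optimal_def by blast
  ultimately have "pol_bias P0 P1 r0 r1 lam q = pol_bias P0 P1 r0 r1 lam \<pi>"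
    by (intro ext) (meson order_antisym)
  then show ?thesis unfolding opt_act_adv_def q_def[symmetric] act_adv_def by simp
qed

lemma poisson_unichain:
  fixes P :: "'s::finite \<Rightarrow> 's \<Rightarrow> real"
  assumes P: "row_stochastic P" and U: "unichain P"
  shows "\<exists>g. \<forall>s. g + bias P r s = r s + mat_vec P (bias P r) s"
proof -
  obtain k w z where hk: "\<forall>s. mat_vec P k s = k s" and hw: "\<forall>s. w s = z s - mat_vec P z s"
     and hx: "\<forall>s. r s = k s + (w s - mat_vec P w s)"
    using decompE[OF P] by blast
  have b: "bias P r = w" using bias_eq[OF P hk[rule_format] hx[rule_format] hw[rule_format]] by auto
  obtain \<rho> where rch: "\<And>s. reach P s \<rho>" using unichain_reach[OF U] by blast
  have kc: "k s = k \<rho>" for s by (rule harmonic_const[OF P hk[rule_format] rch])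
  have "k \<rho> + bias P r s = r s + mat_vec P (bias P r) s" for s
    using hx[rule_format, of s] kc[of s] b by simp
  then show ?thesis by blast
qed

lemma span_nonneg: "0 \<le> span (b::'s::finite \<Rightarrow> real)"
proof -
  have "Min (range b) \<le> b undefined" by simp
  moreover have "b undefined \<le> Max (range b)" by simp
  ultimately show ?thesis unfolding span_def by simp
qed

lemma mat_norm_ge: "(\<Sum>t\<in>UNIV. \<bar>A s t\<bar>) \<le> mat_norm (A::'s::finite \<Rightarrow> 's \<Rightarrow> real)"
  unfolding mat_norm_def by simp

lemma mat_norm_nonneg: "0 \<le> mat_norm (A::'s::finite \<Rightarrow> 's \<Rightarrow> real)"
proof -
  have "0 \<le> (\<Sum>t\<in>UNIV. \<bar>A undefined t\<bar>)" by (rule sum_nonneg) simp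
  then show ?thesis using mat_norm_ge[of A undefined] by linarith
qed

lemma sup_norm_ge: "\<bar>v s\<bar> \<le> sup_norm (v::'s::finite \<Rightarrow> real)"
  unfolding sup_norm_def by simp

lemma adv_bound:
  fixes P0 P1 :: "'s::finite \<Rightarrow> 's \<Rightarrow> real"
  assumes P0: "row_stochastic P0" and P1: "row_stochastic P1"
  shows "\<bar>\<Sum>t\<in>UNIV. (P1 s t - P0 s t) * b t\<bar> \<le> mat_norm (\<lambda>x y. P1 x y - P0 x y) * span b / 2"
proof -
  define c where "c = (Max (range b) + Min (range b)) / 2"
  have bc: "\<bar>b t - c\<bar> \<le> span b / 2" for t
  proof -
    have "Min (range b) \<le> b t" "b t \<le> Max (range b)" by simp_all
    moreover have "\<And>x y z::real. y \<le> x \<Longrightarrow> x \<le> z \<Longrightarrow> \<bar>x - (z + y) / 2\<bar> \<le> (z - y) / 2"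
      by (simp add: abs_le_iff field_simps)
    ultimately show ?thesis unfolding c_def span_def by blast
  qed
  have s0: "(\<Sum>t\<in>UNIV. (P1 s t - P0 s t) * c) = 0"
    using P0 P1 by (simp add: row_stochastic_def sum_subtractf flip: sum_distrib_right)
  have "(\<Sum>t\<in>UNIV. (P1 s t - P0 s t) * b t) = (\<Sum>t\<in>UNIV. (P1 s t - P0 s t) * (b t - c))"
    using s0 by (simp add: right_diff_distrib sum_subtractf)
  also have "\<bar>\<dots>\<bar> \<le> (\<Sum>t\<in>UNIV. \<bar>(P1 s t - P0 s t) * (b t - c)\<bar>)" by (rule sum_abs)
  also have "\<dots> \<le> (\<Sum>t\<in>UNIV. \<bar>P1 s t - P0 s t\<bar> * (span b / 2))"
    by (rule sum_mono) (simp only: abs_mult, rule mult_left_mono[OF bc], simp)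
  also have "\<dots> = (\<Sum>t\<in>UNIV. \<bar>P1 s t - P0 s t\<bar>) * (span b / 2)" by (simp add: sum_distrib_right)
  also have "\<dots> \<le> mat_norm (\<lambda>x y. P1 x y - P0 x y) * (span b / 2)"
    by (rule mult_right_mono) (use mat_norm_ge[of "\<lambda>x y. P1 x y - P0 x y" s] span_nonneg[of b] in auto)
  finally show ?thesis by simp
qed

theorem mainTheorem4:
  fixes P0 P1 :: "'s::finite \<Rightarrow> 's \<Rightarrow> real" and r0 r1 :: "'s \<Rightarrow> real"
  assumes "row_stochastic P0" and "row_stochastic P1"
    and "unichain (pol_P P0 P1 UNIV)" and "unichain (pol_P P0 P1 {})"
    and "indexable P0 P1 r0 r1"
    and "is_whittle_index P0 P1 r0 r1 s l"
  shows "- sup_norm (\<lambda>x. r1 x - r0 x) - span r1 * diameter P1 * mat_norm (\<lambda>x y. P1 x y - P0 x y) / 2 \<le> l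
       \<and> l \<le> sup_norm (\<lambda>x. r1 x - r0 x) + span r0 * diameter P0 * mat_norm (\<lambda>x y. P1 x y - P0 x y) / 2"
proof -
  note P0 = assms(1) and P1 = assms(2) and wi = assms(6)
  define SN where "SN = sup_norm (\<lambda>x. r1 x - r0 x)"
  define MN where "MN = mat_norm (\<lambda>x y. P1 x y - P0 x y)"
  have MN0: "0 \<le> MN" unfolding MN_def by (rule mat_norm_nonneg)
  have SNb: "\<bar>r1 t - r0 t\<bar> \<le> SN" for t unfolding SN_def using sup_norm_ge[of "\<lambda>x. r1 x - r0 x" t] by simp
  have pP0: "pol_P P0 P1 {} = P0" by (simp add: pol_P_def)
  have pP1: "pol_P P0 P1 UNIV = P1" by (simp add: pol_P_def)
  have U0: "unichain P0" using assms(4) pP0 by simp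
  have U1: "unichain P1" using assms(3) pP1 by simp
  have upper: "l \<le> SN + span r0 * diameter P0 * MN / 2"
  proof (rule ccontr)
    assume nl: "\<not> l \<le> SN + span r0 * diameter P0 * MN / 2"
    define Ub where "Ub = SN + span r0 * diameter P0 * MN / 2"
    define lam where "lam = (Ub + l) / 2"
    have lamU: "Ub < lam" "lam < l" using nl unfolding lam_def Ub_def by auto
    have pos: "opt_act_adv P0 P1 r0 r1 lam s > 0" using wi lamU(2) unfolding is_whittle_index_def by blast
    have pr0: "pol_r r0 r1 lam {} = r0" by (simp add: pol_r_def)
    define b0 where "b0 = bias P0 r0"
    have pb: "pol_bias P0 P1 r0 r1 lam {} = b0" unfolding pol_bias_def pP0 pr0 b0_def ..
    obtain g where poi: "\<And>t. g + b0 t = r0 t + mat_vec P0 b0 t"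
      using poisson_unichain[OF P0 U0, of r0] unfolding b0_def by blast
    have sb: "span b0 \<le> span r0 * diameter P0" by (rule span_bias[OF P0 U0 poi])
    have neg: "act_adv P0 P1 r0 r1 lam {} t < 0" for t
    proof -
      have "act_adv P0 P1 r0 r1 lam {} t = r1 t - r0 t - lam + (\<Sum>u\<in>UNIV. (P1 t u - P0 t u) * b0 u)"
        unfolding act_adv_def pb by simp
      also have "\<dots> \<le> SN - lam + MN * span b0 / 2"
      proof -
        have A: "\<bar>\<Sum>u\<in>UNIV. (P1 t u - P0 t u) * b0 u\<bar> \<le> MN * span b0 / 2"
          using adv_bound[OF P0 P1, of t b0] unfolding MN_def .
        have "(\<Sum>u\<in>UNIV. (P1 t u - P0 t u) * b0 u) \<le> MN * span b0 / 2" using A by (simp add: abs_le_iff)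
        moreover have "r1 t - r0 t \<le> SN" using SNb[of t] by (simp add: abs_le_iff)
        ultimately show ?thesis by linarith
      qed
      also have "\<dots> \<le> SN - lam + MN * (span r0 * diameter P0) / 2"
        using mult_left_mono[OF sb MN0] by simp
      also have "\<dots> < 0" using lamU(1) unfolding Ub_def by (simp add: algebra_simps)
      finally show ?thesis .
    qed
    have "bias_optimal P0 P1 r0 r1 lam {}" by (rule BO[OF P0 P1 assms(4)]) (use neg in auto)
    then have "opt_act_adv P0 P1 r0 r1 lam s = act_adv P0 P1 r0 r1 lam {} s" by (rule opt_eq)
    then show False using pos neg[of s] by simp
  qed
  have lower: "- SN - span r1 * diameter P1 * MN / 2 \<le> l"
  proof (rule ccontr)
    assume nl: "\<not> - SN - span r1 * diameter P1 * MN / 2 \<le> l"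
    define Lb where "Lb = - SN - span r1 * diameter P1 * MN / 2"
    define lam where "lam = (Lb + l) / 2"
    have lamL: "lam < Lb" "l < lam" using nl unfolding lam_def Lb_def by auto
    have negw: "opt_act_adv P0 P1 r0 r1 lam s < 0" using wi lamL(2) unfolding is_whittle_index_def by blast
    have pr1: "pol_r r0 r1 lam UNIV = (\<lambda>t. r1 t - lam)" by (simp add: pol_r_def)
    define b1 where "b1 = bias P1 (\<lambda>t. r1 t - lam)"
    have pb: "pol_bias P0 P1 r0 r1 lam UNIV = b1" unfolding pol_bias_def pP1 pr1 b1_def ..
    obtain g where poi: "\<And>t. g + b1 t = (r1 t - lam) + mat_vec P1 b1 t"
      using poisson_unichain[OF P1 U1, of "\<lambda>t. r1 t - lam"] unfolding b1_def by blast
    have poi': "(g + lam) + b1 t = r1 t + mat_vec P1 b1 t" for t using poi[of t] by simp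
    have sb: "span b1 \<le> span r1 * diameter P1" by (rule span_bias[OF P1 U1 poi'])
    have posa: "act_adv P0 P1 r0 r1 lam UNIV t > 0" for t
    proof -
      have "0 < Lb - lam" using lamL by simp
      also have "Lb - lam \<le> - SN - lam - MN * span b1 / 2"
        using mult_left_mono[OF sb MN0] unfolding Lb_def by (simp add: algebra_simps)
      also have "\<dots> \<le> r1 t - r0 t - lam + (\<Sum>u\<in>UNIV. (P1 t u - P0 t u) * b1 u)"
      proof -
        have A: "\<bar>\<Sum>u\<in>UNIV. (P1 t u - P0 t u) * b1 u\<bar> \<le> MN * span b1 / 2"
          using adv_bound[OF P0 P1, of t b1] unfolding MN_def .
        have "- (MN * span b1 / 2) \<le> (\<Sum>u\<in>UNIV. (P1 t u - P0 t u) * b1 u)" using A by (simp add: abs_le_iff)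
        moreover have "- SN \<le> r1 t - r0 t" using SNb[of t] by (simp add: abs_le_iff)
        ultimately show ?thesis by linarith
      qed
      also have "\<dots> = act_adv P0 P1 r0 r1 lam UNIV t"
        unfolding act_adv_def pb by simp
      finally show ?thesis .
    qed
    have "bias_optimal P0 P1 r0 r1 lam UNIV" by (rule BO[OF P0 P1 assms(3)]) (use posa in auto)
    then have "opt_act_adv P0 P1 r0 r1 lam s = act_adv P0 P1 r0 r1 lam UNIV s" by (rule opt_eq)
    then show False using negw posa[of s] by simp
  qed
  show ?thesis using upper lower unfolding SN_def MN_def by (simp add: algebra_simps)
qed


end
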